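(* Let $k \geq 1$ be an integer and suppose $t \in [0, 1]$ satisfies $$\frac{k}{k+1} \left((t^k - t + 1)^{\frac{k+1}{k}} - t^{k + 1}\right) \geq \frac{1 - t^2}{2}.$$ Then in any election there exists a committee of $k$ candidates that is $(t^k - t + 1)$-undominated.
   Context: An election consists of a finite set $V$ of $n$ voters, a finite set $C$ of candidates, and for each voter $v$ a strict linear order $\succ_v$ on $C$. A committee is a subset $S \subseteq C$. For a candidate $a$ and committee $S$, write $a \succ_v S$ if $v$ prefers $a$ to every member of $S$, and let $\frac1n|a \succ S| = \frac1n|\{v \in V : a \succ_v S\}|$. A committee $S$ is $\alpha$-undominated if for every candidate $a \in C$, $\frac1n|a \succ S| < \alpha$. *)

theory Defs
  imports Complex_Main
begin

text \<open>A strict linear order on the candidate set C, given as a binary predicate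
  (R a b means a is ranked strictly above b).\<close>
definition strict_linear_order_on :: "'c set \<Rightarrow> ('c \<Rightarrow> 'c \<Rightarrow> bool) \<Rightarrow> bool" where
  "strict_linear_order_on C R \<longleftrightarrow>
     (\<forall>a\<in>C. \<not> R a a) \<and>
     (\<forall>a\<in>C. \<forall>b\<in>C. \<forall>c\<in>C. R a b \<longrightarrow> R b c \<longrightarrow> R a c) \<and>
     (\<forall>a\<in>C. \<forall>b\<in>C. a \<noteq> b \<longrightarrow> R a b \<or> R b a)"

definition election :: "'v set \<Rightarrow> 'c set \<Rightarrow> ('v \<Rightarrow> 'c \<Rightarrow> 'c \<Rightarrow> bool) \<Rightarrow> bool" where
  "election V C P \<longleftrightarrow> finite V \<and> V \<noteq> {} \<and> finite C \<and>
     (\<forall>v\<in>V. strict_linear_order_on C (P v))"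

definition prefers_to_committee :: "('v \<Rightarrow> 'c \<Rightarrow> 'c \<Rightarrow> bool) \<Rightarrow> 'v \<Rightarrow> 'c \<Rightarrow> 'c set \<Rightarrow> bool" where
  "prefers_to_committee P v a S \<longleftrightarrow> (\<forall>s\<in>S. P v a s)"

definition dom_fraction :: "'v set \<Rightarrow> ('v \<Rightarrow> 'c \<Rightarrow> 'c \<Rightarrow> bool) \<Rightarrow> 'c \<Rightarrow> 'c set \<Rightarrow> real" where
  "dom_fraction V P a S = real (card {v\<in>V. prefers_to_committee P v a S}) / real (card V)"

definition undominated :: "'v set \<Rightarrow> 'c set \<Rightarrow> ('v \<Rightarrow> 'c \<Rightarrow> 'c \<Rightarrow> bool) \<Rightarrow> real \<Rightarrow> 'c set \<Rightarrow> bool" where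
  "undominated V C P \<alpha> S \<longleftrightarrow> (\<forall>a\<in>C. dom_fraction V P a S < \<alpha>)"

end

theory Submission
  imports Defs "HOL-Library.FuncSet"
begin

definition comb :: "'x \<Rightarrow> (('x \<Rightarrow> real) \<times> real) \<Rightarrow> (('x \<Rightarrow> real) \<times> real) \<Rightarrow> (('x \<Rightarrow> real) \<times> real)" where
  "comb z e1 e2 = ((\<lambda>j. (- fst e2 z) * fst e1 j + fst e1 z * fst e2 j),
                   (- fst e2 z) * snd e1 + fst e1 z * snd e2)"

lemma sum_ind: "finite S \<Longrightarrow> e0 \<in> S \<Longrightarrow> (\<Sum>e\<in>S. (if e = e0 then 1 else 0) * g e) = (g e0::real)"
proof -
  assume "finite S" "e0 \<in> S"
  have "(\<Sum>e\<in>S. (if e = e0 then 1 else 0) * g e) = (\<Sum>e\<in>S. if e = e0 then g e else 0)"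
    by (rule sum.cong) auto
  thus ?thesis using \<open>finite S\<close> \<open>e0 \<in> S\<close> by (simp add: sum.delta)
qed

lemma fm_farkas:
  fixes X :: "'x set" and S :: "(('x \<Rightarrow> real) \<times> real) set"
  assumes "finite X"
  shows "finite S \<Longrightarrow> (\<exists>x. \<forall>e\<in>S. (\<Sum>j\<in>X. fst e j * x j) \<le> snd e) \<or>
     (\<exists>l. (\<forall>e\<in>S. 0 \<le> l e) \<and> (\<forall>j\<in>X. (\<Sum>e\<in>S. l e * fst e j) = 0) \<and> (\<Sum>e\<in>S. l e * snd e) < 0)"
  using assms
proof (induction X arbitrary: S rule: finite_induct)
  case empty
  show ?case
  proof (cases "\<forall>e\<in>S. 0 \<le> snd e")
    case True then show ?thesis by auto
  next
    case False
    then obtain e0 where e0': "e0 \<in> S" "\<not> 0 \<le> snd e0" by blast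
    hence e0: "e0 \<in> S" "snd e0 < 0" by (auto simp: not_le)
    have "(\<Sum>e\<in>S. (if e = e0 then 1 else 0) * snd e) = snd e0"
      using e0 empty.prems by (simp add: sum_ind)
    then show ?thesis using e0 by (intro disjI2 exI[of _ "\<lambda>e. if e = e0 then 1 else 0"]) auto
  qed
next
  case (insert z X)
  define Pp where "Pp = {e\<in>S. fst e z > 0}"
  define Nn where "Nn = {e\<in>S. fst e z < 0}"
  define Zz where "Zz = {e\<in>S. fst e z = 0}"
  define S' where "S' = Zz \<union> (\<lambda>(e1,e2). comb z e1 e2) ` (Pp \<times> Nn)"
  have finS: "finite S" by fact
  have fins: "finite Pp" "finite Nn" "finite Zz" using finS by (auto simp: Pp_def Nn_def Zz_def)
  hence "finite S'" by (auto simp: S'_def)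
  from insert.IH[OF this] show ?case
  proof
    assume "\<exists>x. \<forall>e\<in>S'. (\<Sum>j\<in>X. fst e j * x j) \<le> snd e"
    then obtain x where x: "\<And>e. e \<in> S' \<Longrightarrow> (\<Sum>j\<in>X. fst e j * x j) \<le> snd e" by blast
    define r where "r e = snd e - (\<Sum>j\<in>X. fst e j * x j)" for e
    define v where "v = (if Nn = {} then (if Pp = {} then 0 else Min ((\<lambda>e. r e / fst e z) ` Pp))
                         else Max ((\<lambda>e. r e / fst e z) ` Nn))"
    have compat: "r e2 / fst e2 z \<le> r e1 / fst e1 z" if e1: "e1 \<in> Pp" and e2: "e2 \<in> Nn" for e1 e2
    proof -
      have a1: "fst e1 z > 0" and a2: "fst e2 z < 0" using e1 e2 by (auto simp: Pp_def Nn_def)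
      have inS: "comb z e1 e2 \<in> S'" using e1 e2 by (auto simp: S'_def)
      have eqc: "(\<Sum>j\<in>X. fst (comb z e1 e2) j * x j) = (- fst e2 z) * (\<Sum>j\<in>X. fst e1 j * x j) + fst e1 z * (\<Sum>j\<in>X. fst e2 j * x j)"
        by (simp only: comb_def fst_conv distrib_right sum.distrib sum_distrib_left mult.assoc)
      from x[OF inS] have "(- fst e2 z) * (\<Sum>j\<in>X. fst e1 j * x j) + fst e1 z * (\<Sum>j\<in>X. fst e2 j * x j)
           \<le> (- fst e2 z) * snd e1 + fst e1 z * snd e2"
        unfolding eqc by (simp add: comb_def)
      hence h: "0 \<le> (- fst e2 z) * r e1 + fst e1 z * r e2" by (simp add: r_def algebra_simps)
      have "r e2 / fst e2 z = - (fst e1 z * r e2) / (fst e1 z * (- fst e2 z))" using a1 a2 by (simp add: field_simps)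
      also have "\<dots> \<le> ((- fst e2 z) * r e1) / (fst e1 z * (- fst e2 z))"
        using h a1 a2 by (intro divide_right_mono) (auto simp: mult_pos_neg less_imp_le)
      also have "\<dots> = r e1 / fst e1 z" using a1 a2 by (simp add: field_simps)
      finally show ?thesis .
    qed
    define x' where "x' = x(z := v)"
    have sumeq: "(\<Sum>j\<in>insert z X. fst e j * x' j) = fst e z * v + (\<Sum>j\<in>X. fst e j * x j)" for e
    proof -
      have "(\<Sum>j\<in>X. fst e j * x' j) = (\<Sum>j\<in>X. fst e j * x j)"
        using insert.hyps by (intro sum.cong) (auto simp: x'_def)
      thus ?thesis using insert.hyps by (simp add: x'_def)
    qed
    have "\<forall>e\<in>S. (\<Sum>j\<in>insert z X. fst e j * x' j) \<le> snd e"
    proof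
      fix e assume eS: "e \<in> S"
      consider "e \<in> Zz" | "e \<in> Pp" | "e \<in> Nn" using eS by (force simp: Zz_def Pp_def Nn_def)
      then have "fst e z * v \<le> r e"
      proof cases
        case 1
        hence "e \<in> S'" by (auto simp: S'_def)
        from x[OF this] 1 show ?thesis by (simp add: r_def Zz_def)
      next
        case 2
        hence a: "fst e z > 0" by (simp add: Pp_def)
        have "v \<le> r e / fst e z"
        proof (cases "Nn = {}")
          case True
          hence "v = Min ((\<lambda>e. r e / fst e z) ` Pp)" using 2 by (auto simp: v_def)
          thus ?thesis using 2 fins by (auto intro: Min_le)
        next
          case False
          hence "v \<in> (\<lambda>e. r e / fst e z) ` Nn" using fins by (auto simp: v_def intro!: Max_in)
          then obtain e2 where "e2 \<in> Nn" "v = r e2 / fst e2 z" by auto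
          thus ?thesis using compat[OF 2] by auto
        qed
        thus ?thesis using a by (simp add: field_simps)
      next
        case 3
        hence a: "fst e z < 0" by (simp add: Nn_def)
        have "Nn \<noteq> {}" using 3 by auto
        hence "v = Max ((\<lambda>e. r e / fst e z) ` Nn)" by (simp add: v_def)
        hence "r e / fst e z \<le> v" using 3 fins by (auto intro: Max_ge)
        thus ?thesis using a by (simp add: field_simps)
      qed
      thus "(\<Sum>j\<in>insert z X. fst e j * x' j) \<le> snd e" by (simp add: sumeq r_def)
    qed
    thus ?thesis by blast
  next
    assume "\<exists>l. (\<forall>e\<in>S'. 0 \<le> l e) \<and> (\<forall>j\<in>X. (\<Sum>e\<in>S'. l e * fst e j) = 0) \<and> (\<Sum>e\<in>S'. l e * snd e) < 0"
    then obtain mu where mu: "\<And>e. e\<in>S' \<Longrightarrow> 0 \<le> mu e" "\<And>j. j\<in>X \<Longrightarrow> (\<Sum>e\<in>S'. mu e * fst e j) = 0"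
       "(\<Sum>e\<in>S'. mu e * snd e) < 0" by blast
    have "\<forall>e\<in>S'. \<exists>L. (\<forall>c\<in>S. 0 \<le> L c) \<and> (\<forall>j. (\<Sum>c\<in>S. L c * fst c j) = fst e j) \<and> (\<Sum>c\<in>S. L c * snd c) = snd e"
    proof
      fix e assume "e \<in> S'"
      then consider "e \<in> Zz" | e1 e2 where "e1 \<in> Pp" "e2 \<in> Nn" "e = comb z e1 e2" by (auto simp: S'_def)
      then show "\<exists>L. (\<forall>c\<in>S. 0 \<le> L c) \<and> (\<forall>j. (\<Sum>c\<in>S. L c * fst c j) = fst e j) \<and> (\<Sum>c\<in>S. L c * snd c) = snd e"
      proof cases
        case 1
        hence "e \<in> S" by (simp add: Zz_def)
        thus ?thesis using finS
          by (intro exI[of _ "\<lambda>c. if c = e then 1 else 0"]) (simp add: sum_ind)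
      next
        case (2 e1 e2)
        have a1: "fst e1 z > 0" and a2: "fst e2 z < 0" and s1: "e1 \<in> S" and s2: "e2 \<in> S"
          using 2 by (auto simp: Pp_def Nn_def)
        have ne: "e1 \<noteq> e2" using a1 a2 by auto
        define L where "L c = (if c = e1 then - fst e2 z else 0) + (if c = e2 then fst e1 z else 0)" for c
        have gen: "(\<Sum>c\<in>S. L c * g c) = (- fst e2 z) * g e1 + fst e1 z * g e2" for g :: "_ \<Rightarrow> real"
        proof -
          have "(\<Sum>c\<in>S. L c * g c) = (\<Sum>c\<in>S. (if c = e1 then 1 else 0) * ((- fst e2 z) * g c)) + (\<Sum>c\<in>S. (if c = e2 then 1 else 0) * (fst e1 z * g c))"
            by (subst sum.distrib[symmetric], rule sum.cong) (auto simp: L_def ne)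
          thus ?thesis using s1 s2 finS by (simp only: sum_ind)
        qed
        have "\<forall>c\<in>S. 0 \<le> L c" using a1 a2 by (auto simp: L_def)
        moreover have "\<forall>j. (\<Sum>c\<in>S. L c * fst c j) = fst e j" unfolding gen 2 comb_def fst_conv by blast
        moreover have "(\<Sum>c\<in>S. L c * snd c) = snd e" by (simp only: gen 2 comb_def snd_conv)
        ultimately show ?thesis by blast
      qed
    qed
    then obtain L where LL: "\<forall>e\<in>S'. (\<forall>c\<in>S. 0 \<le> L e c) \<and> (\<forall>j. (\<Sum>c\<in>S. L e c * fst c j) = fst e j) \<and> (\<Sum>c\<in>S. L e c * snd c) = snd e"
      by (rule bchoice[elim_format]) blast
    have L: "\<And>e c. e \<in> S' \<Longrightarrow> c \<in> S \<Longrightarrow> 0 \<le> L e c"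
       "\<And>e j. e \<in> S' \<Longrightarrow> (\<Sum>c\<in>S. L e c * fst c j) = fst e j"
       "\<And>e. e \<in> S' \<Longrightarrow> (\<Sum>c\<in>S. L e c * snd c) = snd e"
      using LL by blast+
    define lam where "lam c = (\<Sum>e\<in>S'. mu e * L e c)" for c
    have swap: "(\<Sum>c\<in>S. lam c * g c) = (\<Sum>e\<in>S'. mu e * (\<Sum>c\<in>S. L e c * g c))" for g :: "_ \<Rightarrow> real"
    proof -
      have "(\<Sum>c\<in>S. lam c * g c) = (\<Sum>c\<in>S. \<Sum>e\<in>S'. mu e * (L e c * g c))"
        unfolding lam_def sum_distrib_right by (simp add: mult.assoc)
      also have "\<dots> = (\<Sum>e\<in>S'. \<Sum>c\<in>S. mu e * (L e c * g c))" by (rule sum.swap)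
      also have "\<dots> = (\<Sum>e\<in>S'. mu e * (\<Sum>c\<in>S. L e c * g c))" by (simp add: sum_distrib_left)
      finally show ?thesis .
    qed
    have zz: "fst e z = 0" if "e \<in> S'" for e
      using that by (auto simp: S'_def Zz_def comb_def)
    have "\<forall>c\<in>S. 0 \<le> lam c" using mu L by (auto simp: lam_def intro!: sum_nonneg)
    moreover have "\<forall>j\<in>insert z X. (\<Sum>c\<in>S. lam c * fst c j) = 0"
    proof
      fix j assume j: "j \<in> insert z X"
      have "(\<Sum>c\<in>S. lam c * fst c j) = (\<Sum>e\<in>S'. mu e * fst e j)"
        unfolding swap by (intro sum.cong) (auto simp: L)
      also have "\<dots> = 0"
      proof (cases "j = z")
        case True thus ?thesis by (intro sum.neutral) (simp add: zz)
      next
        case False thus ?thesis using j mu by auto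
      qed
      finally show "(\<Sum>c\<in>S. lam c * fst c j) = 0" .
    qed
    moreover have "(\<Sum>c\<in>S. lam c * snd c) < 0"
    proof -
      have "(\<Sum>c\<in>S. lam c * snd c) = (\<Sum>e\<in>S'. mu e * snd e)"
        unfolding swap by (intro sum.cong) (auto simp: L)
      thus ?thesis using mu by simp
    qed
    ultimately show ?thesis by blast
  qed
qed

lemma farkas_indexed:
  fixes X :: "'x set" and I :: "'i set" and A :: "'i \<Rightarrow> 'x \<Rightarrow> real" and b :: "'i \<Rightarrow> real"
  assumes "finite X" "finite I"
  shows "(\<exists>x. \<forall>i\<in>I. (\<Sum>j\<in>X. A i j * x j) \<le> b i) \<or>
     (\<exists>l. (\<forall>i\<in>I. 0 \<le> l i) \<and> (\<forall>j\<in>X. (\<Sum>i\<in>I. l i * A i j) = 0) \<and> (\<Sum>i\<in>I. l i * b i) < 0)"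
proof -
  define h where "h i = (A i, b i)" for i
  have "finite (h ` I)" using assms by simp
  from fm_farkas[OF assms(1) this] show ?thesis
  proof
    assume "\<exists>x. \<forall>e\<in>h ` I. (\<Sum>j\<in>X. fst e j * x j) \<le> snd e"
    thus ?thesis by (auto simp: h_def)
  next
    assume "\<exists>l. (\<forall>e\<in>h ` I. 0 \<le> l e) \<and> (\<forall>j\<in>X. (\<Sum>e\<in>h ` I. l e * fst e j) = 0) \<and> (\<Sum>e\<in>h ` I. l e * snd e) < 0"
    then obtain l where l: "\<forall>e\<in>h ` I. 0 \<le> l e" "\<forall>j\<in>X. (\<Sum>e\<in>h ` I. l e * fst e j) = 0" "(\<Sum>e\<in>h ` I. l e * snd e) < 0"
      by blast
    define cnt where "cnt e = real (card {i\<in>I. h i = e})" for e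
    define l' where "l' i = l (h i) / cnt (h i)" for i
    have cntpos: "cnt e > 0" if "e \<in> h ` I" for e
      using that assms(2) by (auto simp: cnt_def card_gt_0_iff)
    have key: "(\<Sum>i\<in>I. l' i * g (h i)) = (\<Sum>e\<in>h ` I. l e * g e)" for g :: "_ \<Rightarrow> real"
    proof -
      have "(\<Sum>i\<in>I. l' i * g (h i)) = (\<Sum>e\<in>h ` I. \<Sum>i\<in>{i\<in>I. h i = e}. l' i * g (h i))"
        by (rule sum.image_gen[OF assms(2)])
      also have "\<dots> = (\<Sum>e\<in>h ` I. \<Sum>i\<in>{i\<in>I. h i = e}. l e / cnt e * g e)"
        by (intro sum.cong refl) (auto simp: l'_def)
      also have "\<dots> = (\<Sum>e\<in>h ` I. cnt e * (l e / cnt e * g e))"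
        by (intro sum.cong refl) (simp add: cnt_def)
      also have "\<dots> = (\<Sum>e\<in>h ` I. l e * g e)"
        using cntpos by (intro sum.cong refl) (metis less_irrefl nonzero_mult_div_cancel_left times_divide_eq_left times_divide_eq_right)
      finally show ?thesis .
    qed
    have "\<forall>i\<in>I. 0 \<le> l' i" unfolding l'_def
      using l(1) cntpos by (meson divide_nonneg_pos image_eqI)
    moreover have "\<forall>j\<in>X. (\<Sum>i\<in>I. l' i * A i j) = 0"
      using key[of "\<lambda>e. fst e j" for j] l(2) by (simp add: h_def)
    moreover have "(\<Sum>i\<in>I. l' i * b i) < 0"
      using key[of snd] l(3) by (simp add: h_def)
    ultimately show ?thesis by blast
  qed
qed


definition slo :: "'c set \<Rightarrow> ('c \<Rightarrow> 'c \<Rightarrow> bool) \<Rightarrow> bool" where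
  "slo C R \<longleftrightarrow> (\<forall>a\<in>C. \<not> R a a) \<and>
     (\<forall>a\<in>C. \<forall>b\<in>C. \<forall>c\<in>C. R a b \<longrightarrow> R b c \<longrightarrow> R a c) \<and>
     (\<forall>a\<in>C. \<forall>b\<in>C. a \<noteq> b \<longrightarrow> R a b \<or> R b a)"

lemma slo_subset: "slo C R \<Longrightarrow> D \<subseteq> C \<Longrightarrow> slo D R"
  unfolding slo_def by blast

lemma exists_top:
  assumes "finite D" "D \<noteq> {}" "slo D R"
  shows "\<exists>x\<in>D. \<forall>c\<in>D - {x}. R x c"
  using assms
proof (induction D rule: finite_ne_induct)
  case (singleton x) thus ?case by auto
next
  case (insert y F)
  have sF: "slo F R" using insert.prems by (rule slo_subset) auto
  from insert.IH[OF sF] obtain x where x: "x \<in> F" "\<forall>c\<in>F - {x}. R x c" by blast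
  have "y \<noteq> x" using x insert.hyps by auto
  hence "R x y \<or> R y x" using insert.prems x(1) unfolding slo_def by auto
  thus ?case
  proof
    assume "R y x"
    have tr: "\<And>a b c. a \<in> insert y F \<Longrightarrow> b \<in> insert y F \<Longrightarrow> c \<in> insert y F \<Longrightarrow> R a b \<Longrightarrow> R b c \<Longrightarrow> R a c"
      using insert.prems unfolding slo_def by blast
    have "R y c" if c: "c \<in> insert y F - {y}" for c
    proof (cases "c = x")
      case True thus ?thesis using \<open>R y x\<close> by simp
    next
      case False
      hence "R x c" using x c by simp
      thus ?thesis using tr[of y x c] \<open>R y x\<close> c x(1) by simp
    qed
    thus ?thesis by blast
  next
    assume "R x y"
    hence "\<forall>c\<in>insert y F - {x}. R x c" using x by auto
    thus ?thesis using x by blast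
  qed
qed

lemma top_induct:
  assumes "finite C" "slo C R" "Q {}"
    "\<And>x D. finite D \<Longrightarrow> x \<notin> D \<Longrightarrow> insert x D \<subseteq> C \<Longrightarrow> (\<forall>c\<in>D. R x c) \<Longrightarrow> Q D \<Longrightarrow> Q (insert x D)"
  shows "Q C"
proof -
  have "\<forall>D. D \<subseteq> C \<longrightarrow> card D = n \<longrightarrow> Q D" for n
  proof (induction n rule: less_induct)
    case (less n)
    show ?case
    proof (intro allI impI)
      fix D assume D: "D \<subseteq> C" "card D = n"
      have fD: "finite D" using D assms(1) finite_subset by blast
      show "Q D"
      proof (cases "D = {}")
        case True thus ?thesis using assms(3) by simp
      next
        case False
        have "slo D R" using assms(2) D(1) by (rule slo_subset)
        from exists_top[OF fD False this] obtain x where x: "x \<in> D" "\<forall>c\<in>D - {x}. R x c" by blast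
        have "n > 0" using D x fD by (auto simp: card_gt_0_iff)
        hence "card (D - {x}) < n" using D x fD by simp
        hence "Q (D - {x})" using less D by blast
        moreover have "D = insert x (D - {x})" using x by auto
        ultimately show ?thesis using assms(4)[of "D - {x}" x] fD x D by auto
      qed
    qed
  qed
  thus ?thesis by blast
qed

lemma slo_asym: "slo C R \<Longrightarrow> a \<in> C \<Longrightarrow> b \<in> C \<Longrightarrow> R a b \<Longrightarrow> \<not> R b a"
  unfolding slo_def by blast

lemma voter_bound:
  fixes q :: "'c \<Rightarrow> real" and t :: real
  assumes "finite C" "slo C R" "\<forall>c\<in>C. 0 \<le> q c"
  shows "(\<Sum>a\<in>C. q a * max 0 ((\<Sum>c\<in>{c\<in>C. R a c}. q c) - t)) \<le> (max 0 (sum q C - t))^2 / 2"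
proof (rule top_induct[OF assms(1) assms(2), where Q = "\<lambda>D. (\<Sum>a\<in>D. q a * max 0 ((\<Sum>c\<in>{c\<in>D. R a c}. q c) - t)) \<le> (max 0 (sum q D - t))^2 / 2"])
  show "(\<Sum>a\<in>{}. q a * max 0 ((\<Sum>c\<in>{c\<in>{}. R a c}. q c) - t)) \<le> (max 0 (sum q {} - t))^2 / 2" by simp
next
  fix x D assume 2: "finite D" "x \<notin> D" "insert x D \<subseteq> C" "\<forall>c\<in>D. R x c"
    "(\<Sum>a\<in>D. q a * max 0 ((\<Sum>c\<in>{c\<in>D. R a c}. q c) - t)) \<le> (max 0 (sum q D - t))^2 / 2"
  have sl: "slo (insert x D) R" using assms(2) 2(3) by (rule slo_subset)
  have e1: "{c\<in>insert x D. R a c} = {c\<in>D. R a c}" if "a \<in> D" for a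
    using slo_asym[OF sl] 2 that by auto
  have e2: "{c\<in>insert x D. R x c} = D"
    using 2 sl unfolding slo_def by auto
  define s where "s = sum q D"
  define u where "u = max 0 (s - t)"
  have qx: "0 \<le> q x" using assms(3) 2 by auto
  have "(\<Sum>a\<in>insert x D. q a * max 0 ((\<Sum>c\<in>{c\<in>insert x D. R a c}. q c) - t))
      = q x * u + (\<Sum>a\<in>D. q a * max 0 ((\<Sum>c\<in>{c\<in>D. R a c}. q c) - t))"
  proof -
    have "(\<Sum>a\<in>insert x D. q a * max 0 ((\<Sum>c\<in>{c\<in>insert x D. R a c}. q c) - t))
       = q x * max 0 ((\<Sum>c\<in>{c\<in>insert x D. R x c}. q c) - t) + (\<Sum>a\<in>D. q a * max 0 ((\<Sum>c\<in>{c\<in>insert x D. R a c}. q c) - t))"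
      by (rule sum.insert[OF 2(1) 2(2)])
    also have "(\<Sum>a\<in>D. q a * max 0 ((\<Sum>c\<in>{c\<in>insert x D. R a c}. q c) - t)) = (\<Sum>a\<in>D. q a * max 0 ((\<Sum>c\<in>{c\<in>D. R a c}. q c) - t))"
      by (intro sum.cong refl) (simp only: e1)
    finally show ?thesis by (simp only: e2 u_def s_def)
  qed
  also have "\<dots> \<le> q x * u + u^2/2" using 2 by (simp add: u_def s_def)
  also have "\<dots> \<le> (max 0 (sum q (insert x D) - t))^2 / 2"
  proof -
    have sx: "sum q (insert x D) = s + q x" using 2 by (simp add: s_def)
    have "u + q x \<le> max 0 (s + q x - t) \<or> u = 0" by (auto simp: u_def)
    thus ?thesis
    proof
      assume h: "u + q x \<le> max 0 (s + q x - t)"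
      have "q x * u + u^2/2 \<le> (u + q x)^2/2" by (simp add: power2_eq_square algebra_simps qx)
      also have "\<dots> \<le> (max 0 (s + q x - t))^2/2"
        using h qx by (intro divide_right_mono power_mono) (auto simp: u_def)
      finally show ?thesis by (simp add: sx)
    next
      assume "u = 0" thus ?thesis by simp
    qed
  qed
  finally show "(\<Sum>a\<in>insert x D. q a * max 0 ((\<Sum>c\<in>{c\<in>insert x D. R a c}. q c) - t)) \<le> (max 0 (sum q (insert x D) - t))^2 / 2" .
qed


lemma pow_core:
  fixes a b :: real and k :: nat
  assumes "0 \<le> a" "a \<le> b" "1 \<le> k"
  shows "real (k+1) * a^k * (b - a) \<le> b^(k+1) - a^(k+1)"
    and "a < b \<Longrightarrow> real (k+1) * a^k * (b - a) < b^(k+1) - a^(k+1)"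
proof -
  have eq: "b^(k+1) - a^(k+1) = (b - a) * (\<Sum>i<k+1. a^(k+1 - Suc i) * b^i)"
    by (rule power_diff_sumr2)
  have le: "\<forall>i\<in>{..<k+1}. a^k \<le> a^(k+1 - Suc i) * b^i"
  proof
    fix i assume "i \<in> {..<k+1}"
    hence i: "i \<le> k" by auto
    have "a^k = a^(k - i) * a^i" using i by (simp add: power_add[symmetric])
    also have "\<dots> \<le> a^(k - i) * b^i" using assms by (intro mult_left_mono power_mono) auto
    finally show "a^k \<le> a^(k+1 - Suc i) * b^i" by simp
  qed
  have s1: "real (k+1) * a^k = (\<Sum>i<k+1. a^k)" by simp
  have "(\<Sum>i<k+1. a^k) \<le> (\<Sum>i<k+1. a^(k+1 - Suc i) * b^i)" by (rule sum_mono) (use le in blast)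
  hence "real (k+1) * a^k * (b - a) \<le> (b - a) * (\<Sum>i<k+1. a^(k+1 - Suc i) * b^i)"
    using assms s1 by (simp add: mult.commute mult_left_mono)
  thus "real (k+1) * a^k * (b - a) \<le> b^(k+1) - a^(k+1)" unfolding eq .
  assume ab: "a < b"
  have "\<exists>i\<in>{..<k+1}. a^k < a^(k+1 - Suc i) * b^i"
    using ab assms by (intro bexI[of _ k]) (auto intro!: power_strict_mono)
  hence "(\<Sum>i<k+1. a^k) < (\<Sum>i<k+1. a^(k+1 - Suc i) * b^i)"
    using le by (intro sum_strict_mono_ex1) auto
  hence "real (k+1) * a^k * (b - a) < (b - a) * (\<Sum>i<k+1. a^(k+1 - Suc i) * b^i)"
    using ab s1 by (simp add: mult.commute mult_strict_left_mono)
  thus "real (k+1) * a^k * (b - a) < b^(k+1) - a^(k+1)" unfolding eq .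
qed

definition psi :: "real \<Rightarrow> real \<Rightarrow> real \<Rightarrow> real" where
  "psi th t y = max 0 (th - max y t)"

definition Kf :: "real \<Rightarrow> nat \<Rightarrow> real \<Rightarrow> real" where
  "Kf th k y = th * y^k - real k / real (k+1) * y^(k+1)"

definition Hf :: "real \<Rightarrow> real \<Rightarrow> nat \<Rightarrow> real \<Rightarrow> real" where
  "Hf th t k y = (if y \<le> t then (th - t) * y^k
      else if y \<le> th then (th - t) * t^k + Kf th k y - Kf th k t
      else (th - t) * t^k + Kf th k th - Kf th k t)"

lemma Kstep:
  fixes a b th :: real
  assumes "0 \<le> a" "a \<le> b" "1 \<le> k"
  shows "(th - b) * (b^k - a^k) \<le> Kf th k b - Kf th k a"
    and "a < b \<Longrightarrow> (th - b) * (b^k - a^k) < Kf th k b - Kf th k a"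
proof -
  have gen: "th*B - r/(r+1)*(b*B) - (th*A - r/(r+1)*(a*A)) - (th - b)*(B - A) = ((b*B - a*A) - (r+1)*A*(b-a))/(r+1)"
    if "r \<ge> 0" for B A r :: real
  proof -
    have ne: "r + 1 \<noteq> 0" using that by simp
    define c where "c = r/(r+1)"
    have c1: "c * (r+1) = r" using ne by (simp add: c_def)
    have "(th*B - c*(b*B) - (th*A - c*(a*A)) - (th - b)*(B - A)) * (r+1) = (th*B - th*A - (th-b)*(B-A))*(r+1) + (c*(r+1))*(a*A - b*B)"
      by (simp add: algebra_simps)
    also have "\<dots> = (th*B - th*A - (th-b)*(B-A))*(r+1) + r*(a*A - b*B)" by (simp only: c1)
    also have "\<dots> = ((b*B - a*A) - (r+1)*A*(b-a))" by (simp add: algebra_simps)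
    finally have "(th*B - c*(b*B) - (th*A - c*(a*A)) - (th - b)*(B - A)) * (r+1) = ((b*B - a*A) - (r+1)*A*(b-a))" .
    thus ?thesis using ne by (simp add: c_def[symmetric] eq_divide_eq)
  qed
  have id: "Kf th k b - Kf th k a - (th - b) * (b^k - a^k)
      = ((b^(k+1) - a^(k+1)) - real (k+1) * a^k * (b - a)) / real (k+1)"
  proof -
    have e1: "real (k+1) = real k + 1" by simp
    have e2: "x^(k+1) = x * x^k" for x :: real by simp
    show ?thesis by (unfold Kf_def e1 e2, rule gen) simp
  qed
  have "0 \<le> ((b^(k+1) - a^(k+1)) - real (k+1) * a^k * (b - a)) / real (k+1)"
    using pow_core(1)[OF assms] by (intro divide_nonneg_pos) auto
  thus "(th - b) * (b^k - a^k) \<le> Kf th k b - Kf th k a" using id by linarith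
  assume "a < b"
  have "0 < ((b^(k+1) - a^(k+1)) - real (k+1) * a^k * (b - a)) / real (k+1)"
    using pow_core(2)[OF assms \<open>a < b\<close>] by (intro divide_pos_pos) auto
  thus "(th - b) * (b^k - a^k) < Kf th k b - Kf th k a" using id by linarith
qed

lemma psi_le: "t \<le> th \<Longrightarrow> y \<le> t \<Longrightarrow> psi th t y = th - t"
  by (simp add: psi_def)
lemma psi_mid: "t \<le> y \<Longrightarrow> y \<le> th \<Longrightarrow> psi th t y = th - y"
  by (simp add: psi_def)
lemma psi_hi: "th \<le> y \<Longrightarrow> psi th t y = 0"
  by (simp add: psi_def)
lemma psi_anti: "y1 \<le> y2 \<Longrightarrow> psi th t y2 \<le> psi th t y1"
  by (simp add: psi_def)
lemma psi_nonneg: "0 \<le> psi th t y" by (simp add: psi_def)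

lemma Hstep_low:
  fixes a b th t :: real
  assumes "0 \<le> t" "t \<le> th" "0 \<le> a" "a \<le> b" "b \<le> th" "1 \<le> k"
  shows "psi th t b * (b^k - a^k) \<le> Hf th t k b - Hf th t k a"
    and "a < b \<Longrightarrow> t < b \<Longrightarrow> psi th t b * (b^k - a^k) < Hf th t k b - Hf th t k a"
proof -
  have main: "psi th t b * (b^k - a^k) \<le> Hf th t k b - Hf th t k a \<and>
        (a < b \<and> t < b \<longrightarrow> psi th t b * (b^k - a^k) < Hf th t k b - Hf th t k a)"
  proof (cases "b \<le> t")
    case True
    hence "a \<le> t" using assms by simp
    thus ?thesis using True assms by (simp add: Hf_def psi_le algebra_simps)
  next
    case False
    hence tb: "t < b" by simp
    have Hb: "Hf th t k b = (th - t) * t^k + Kf th k b - Kf th k t" using False assms by (simp add: Hf_def)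
    have pb: "psi th t b = th - b" using tb assms by (simp add: psi_mid)
    show ?thesis
    proof (cases "t \<le> a")
      case True
      have Ha: "Hf th t k a = (th - t) * t^k + Kf th k a - Kf th k t"
        using True assms by (cases "a = t") (auto simp: Hf_def)
      show ?thesis using Kstep[OF assms(3,4,6)] by (simp add: Ha Hb pb)
    next
      case False
      hence at: "a < t" by simp
      have Ha: "Hf th t k a = (th - t) * a^k" using at by (simp add: Hf_def)
      have k1: "(th - b) * (b^k - t^k) < Kf th k b - Kf th k t"
        using Kstep(2)[OF assms(1) _ assms(6) tb] tb by simp
      have k2: "(th - b) * (t^k - a^k) \<le> (th - t) * (t^k - a^k)"
        using at tb assms by (intro mult_right_mono power_mono) (auto intro: power_mono)
      have "psi th t b * (b^k - a^k) = (th - b) * (b^k - t^k) + (th - b) * (t^k - a^k)"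
        by (simp add: pb algebra_simps)
      also have "\<dots> < Hf th t k b - Hf th t k a"
        using k1 k2 by (simp add: Ha Hb algebra_simps)
      finally show ?thesis by simp
    qed
  qed
  thus "psi th t b * (b^k - a^k) \<le> Hf th t k b - Hf th t k a" by blast
  show "a < b \<Longrightarrow> t < b \<Longrightarrow> psi th t b * (b^k - a^k) < Hf th t k b - Hf th t k a" using main by blast
qed

lemma H_high: "th < y \<Longrightarrow> t \<le> th \<Longrightarrow> Hf th t k y = Hf th t k th"
  by (cases "th = t") (auto simp: Hf_def)

lemma Hstep:
  fixes a b th t :: real
  assumes "0 \<le> t" "t \<le> th" "0 \<le> a" "a \<le> b" "1 \<le> k"
  shows "psi th t b * (b^k - a^k) \<le> Hf th t k b - Hf th t k a"
proof (cases "b \<le> th")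
  case True thus ?thesis using Hstep_low(1)[OF assms(1-4) True assms(5)] by simp
next
  case False
  hence pb: "psi th t b = 0" by (simp add: psi_hi)
  have "Hf th t k a \<le> Hf th t k b"
  proof (cases "a \<le> th")
    case True
    from Hstep_low(1)[OF assms(1-3) True order_refl assms(5)]
    have "Hf th t k a \<le> Hf th t k th" by (simp add: psi_hi)
    thus ?thesis using H_high[of th b t k] False assms by simp
  next
    case False
    thus ?thesis using H_high[of th b t k] H_high[of th a t k] \<open>\<not> b \<le> th\<close> assms by simp
  qed
  thus ?thesis by (simp add: pb)
qed

lemma Hstep_strict:
  fixes s m th t :: real
  assumes "0 \<le> t" "t < th" "0 \<le> s" "s < (t + th)/2" "(t + th)/2 \<le> s + m" "1 \<le> k"
  shows "Hf th t k s + ((s+m)^k - s^k) * psi th t (s+m) < Hf th t k (s+m)"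
proof -
  define m0 where "m0 = (t + th)/2"
  have m0: "t < m0" "m0 \<le> th" "s < m0" "m0 \<le> s + m" using assms by (auto simp: m0_def)
  have 1: "psi th t (s+m) * ((s+m)^k - m0^k) \<le> Hf th t k (s+m) - Hf th t k m0"
    using Hstep[OF assms(1) _ _ m0(4) assms(6)] assms m0 by simp
  have 2: "psi th t m0 * (m0^k - s^k) < Hf th t k m0 - Hf th t k s"
    using Hstep_low(2)[OF assms(1) _ assms(3) _ m0(2) assms(6) m0(3) m0(1)] assms m0 by simp
  have 3: "psi th t (s+m) * (m0^k - s^k) \<le> psi th t m0 * (m0^k - s^k)"
    using m0 assms by (intro mult_right_mono psi_anti) (auto intro: power_mono)
  have "((s+m)^k - s^k) * psi th t (s+m) = psi th t (s+m) * ((s+m)^k - m0^k) + psi th t (s+m) * (m0^k - s^k)"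
    by (simp add: algebra_simps)
  thus ?thesis using 1 2 3 by linarith
qed


definition Fm :: "'c set \<Rightarrow> ('c \<Rightarrow> 'c \<Rightarrow> bool) \<Rightarrow> ('c \<Rightarrow> real) \<Rightarrow> 'c \<Rightarrow> real" where
  "Fm D R p c = (\<Sum>c'\<in>{c'\<in>D. c' = c \<or> R c c'}. p c')"

definition Ev :: "nat \<Rightarrow> real \<Rightarrow> real \<Rightarrow> 'c set \<Rightarrow> ('c \<Rightarrow> 'c \<Rightarrow> bool) \<Rightarrow> ('c \<Rightarrow> real) \<Rightarrow> real" where
  "Ev k th t D R p = (\<Sum>f\<in>PiE {..<k} (\<lambda>_. D). (\<Prod>i<k. p (f i)) * psi th t (Max ((\<lambda>i. Fm D R p (f i)) ` {..<k})))"

lemma prod_PiE_pow: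
  assumes "finite D"
  shows "(\<Sum>f\<in>PiE {..<k} (\<lambda>_. D). (\<Prod>i<k. p (f i))) = (sum p D :: real) ^ k"
proof -
  have "(\<Prod>i<k. \<Sum>y\<in>D. p y) = (\<Sum>f\<in>PiE {..<k} (\<lambda>_. D). (\<Prod>i<k. p (f i)))"
    using assms by (intro prod_sum_PiE) auto
  thus ?thesis by simp
qed

lemma sample_bound:
  fixes C :: "'c set" and p :: "'c \<Rightarrow> real" and t th :: real
  assumes "finite C" "slo C R" "\<forall>c\<in>C. 0 \<le> p c" "1 \<le> k" "0 \<le> t" "t < th"
  shows "Ev k th t C R p \<le> Hf th t k (sum p C) \<and> ((t+th)/2 \<le> sum p C \<longrightarrow> Ev k th t C R p < Hf th t k (sum p C))"
proof (rule top_induct[OF assms(1) assms(2), where Q = "\<lambda>D. Ev k th t D R p \<le> Hf th t k (sum p D) \<and> ((t+th)/2 \<le> sum p D \<longrightarrow> Ev k th t D R p < Hf th t k (sum p D))"])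
  have "PiE {..<k} (\<lambda>_. ({}::'c set)) = {}" using assms(4) by (intro PiE_empty_range[of 0]) auto
  moreover have "Hf th t k 0 = 0" using assms by (simp add: Hf_def)
  ultimately show "Ev k th t {} R p \<le> Hf th t k (sum p {}) \<and> ((t+th)/2 \<le> sum p {} \<longrightarrow> Ev k th t {} R p < Hf th t k (sum p {}))"
    using assms by (simp add: Ev_def)
next
  fix x D assume h: "finite D" "x \<notin> D" "insert x D \<subseteq> C" "\<forall>c\<in>D. R x c"
    and IH: "Ev k th t D R p \<le> Hf th t k (sum p D) \<and> ((t+th)/2 \<le> sum p D \<longrightarrow> Ev k th t D R p < Hf th t k (sum p D))"
  define Dx where "Dx = insert x D"
  have sl: "slo Dx R" using assms(2) h(3) unfolding Dx_def by (rule slo_subset)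
  have pnn: "\<forall>c\<in>Dx. 0 \<le> p c" using assms(3) h(3) by (auto simp: Dx_def)
  have fDx: "finite Dx" using h by (simp add: Dx_def)
  have sDx: "sum p Dx = sum p D + p x" using h by (simp add: Dx_def)
  have px: "0 \<le> p x" using pnn by (simp add: Dx_def)
  have sD: "0 \<le> sum p D" using pnn by (intro sum_nonneg) (auto simp: Dx_def)
  have Fa: "Fm Dx R p c = Fm D R p c" if "c \<in> D" for c
  proof -
    have "{c'\<in>Dx. c' = c \<or> R c c'} = {c'\<in>D. c' = c \<or> R c c'}"
      using that h slo_asym[OF sl, of x c] by (auto simp: Dx_def)
    thus ?thesis by (simp add: Fm_def)
  qed
  have Fb: "Fm Dx R p x = sum p Dx"
  proof -
    have "{c'\<in>Dx. c' = x \<or> R x c'} = Dx" using h by (auto simp: Dx_def)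
    thus ?thesis by (simp add: Fm_def)
  qed
  have Fc: "Fm Dx R p c \<le> sum p Dx" for c
    unfolding Fm_def using pnn fDx by (intro sum_mono2) auto
  define A where "A = PiE {..<k} (\<lambda>_. Dx)"
  define A0 where "A0 = PiE {..<k} (\<lambda>_. D)"
  have A0A: "A0 \<subseteq> A" unfolding A_def A0_def by (intro PiE_mono) (auto simp: Dx_def)
  have fA: "finite A" unfolding A_def using fDx by (intro finite_PiE) auto
  define g where "g f = (\<Prod>i<k. p (f i)) * psi th t (Max ((\<lambda>i. Fm Dx R p (f i)) ` {..<k}))" for f
  have EvDx: "Ev k th t Dx R p = sum g A" by (simp add: Ev_def g_def A_def)
  have part0: "sum g A0 = Ev k th t D R p"
    unfolding Ev_def A0_def[symmetric] g_def
  proof (intro sum.cong refl)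
    fix f assume f: "f \<in> A0"
    have "(\<lambda>i. Fm Dx R p (f i)) ` {..<k} = (\<lambda>i. Fm D R p (f i)) ` {..<k}"
      using f Fa by (intro image_cong refl) (auto simp: A0_def)
    thus "(\<Prod>i<k. p (f i)) * psi th t (Max ((\<lambda>i. Fm Dx R p (f i)) ` {..<k})) =
          (\<Prod>i<k. p (f i)) * psi th t (Max ((\<lambda>i. Fm D R p (f i)) ` {..<k}))" by simp
  qed
  have part1: "sum g (A - A0) = (\<Sum>f\<in>A - A0. (\<Prod>i<k. p (f i))) * psi th t (sum p Dx)"
    unfolding sum_distrib_right g_def
  proof (intro sum.cong refl)
    fix f assume f: "f \<in> A - A0"
    have "\<exists>i<k. f i = x"
    proof (rule ccontr)
      assume "\<not> (\<exists>i<k. f i = x)"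
      hence "f \<in> A0" using f by (auto simp: A_def A0_def Dx_def PiE_def Pi_def)
      thus False using f by simp
    qed
    then obtain i where i: "i < k" "f i = x" by blast
    have "Max ((\<lambda>i. Fm Dx R p (f i)) ` {..<k}) = sum p Dx"
    proof (rule Max_eqI)
      show "sum p Dx \<in> (\<lambda>i. Fm Dx R p (f i)) ` {..<k}"
        using i Fb by (intro image_eqI[of _ _ i]) auto
    qed (use Fc in auto)
    thus "(\<Prod>i<k. p (f i)) * psi th t (Max ((\<lambda>i. Fm Dx R p (f i)) ` {..<k})) =
          (\<Prod>i<k. p (f i)) * psi th t (sum p Dx)" by simp
  qed
  have "(\<Sum>f\<in>A - A0. (\<Prod>i<k. p (f i))) = sum p Dx ^ k - sum p D ^ k"
  proof -
    have "(\<Sum>f\<in>A - A0. (\<Prod>i<k. p (f i))) = (\<Sum>f\<in>A. (\<Prod>i<k. p (f i))) - (\<Sum>f\<in>A0. (\<Prod>i<k. p (f i)))"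
      by (rule sum_diff[OF fA A0A])
    also have "\<dots> = sum p Dx ^ k - sum p D ^ k"
      unfolding A_def A0_def by (simp only: prod_PiE_pow[OF fDx] prod_PiE_pow[OF h(1)])
    finally show ?thesis .
  qed
  hence EvEq: "Ev k th t Dx R p = Ev k th t D R p + ((sum p D + p x)^k - sum p D ^ k) * psi th t (sum p D + p x)"
    using EvDx sum.subset_diff[OF A0A fA, of g] part0 part1 sDx by simp
  have step: "psi th t (sum p D + p x) * ((sum p D + p x)^k - sum p D ^ k) \<le> Hf th t k (sum p D + p x) - Hf th t k (sum p D)"
    using Hstep[OF assms(5) _ sD _ assms(4)] assms px by simp
  have le: "Ev k th t Dx R p \<le> Hf th t k (sum p Dx)"
    using IH step EvEq sDx by (simp add: mult.commute)
  have lt: "Ev k th t Dx R p < Hf th t k (sum p Dx)" if m: "(t+th)/2 \<le> sum p Dx"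
  proof (cases "(t+th)/2 \<le> sum p D")
    case True
    thus ?thesis using IH step EvEq sDx by (simp add: mult.commute)
  next
    case False
    have "Hf th t k (sum p D) + ((sum p D + p x)^k - sum p D ^ k) * psi th t (sum p D + p x) < Hf th t k (sum p D + p x)"
      using Hstep_strict[OF assms(5) assms(6) sD _ _ assms(4)] False m sDx by simp
    thus ?thesis using IH EvEq sDx by simp
  qed
  show "Ev k th t (insert x D) R p \<le> Hf th t k (sum p (insert x D)) \<and> ((t+th)/2 \<le> sum p (insert x D) \<longrightarrow> Ev k th t (insert x D) R p < Hf th t k (sum p (insert x D)))"
    using le lt by (simp add: Dx_def)
qed


lemma sum_N:
  fixes x :: "'c \<Rightarrow> real"
  assumes "finite C" "finite W"
  shows "(\<Sum>j\<in>C. (\<Sum>v\<in>W. if P v a j then 1 else 0) * x j) = (\<Sum>v\<in>W. \<Sum>c\<in>{c\<in>C. P v a c}. x c)"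
proof -
  have "(\<Sum>j\<in>C. (\<Sum>v\<in>W. if P v a j then 1 else 0) * x j) = (\<Sum>j\<in>C. \<Sum>v\<in>W. (if P v a j then x j else 0))"
    unfolding sum_distrib_right by (intro sum.cong refl) auto
  also have "\<dots> = (\<Sum>v\<in>W. \<Sum>j\<in>C. (if P v a j then x j else 0))" by (rule sum.swap)
  also have "\<dots> = (\<Sum>v\<in>W. \<Sum>c\<in>{c\<in>C. P v a c}. x c)"
    using assms by (simp add: sum.inter_filter)
  finally show ?thesis .
qed

lemma sum_split4:
  fixes g :: "('c + bool) + ('c \<times> 'v set) \<Rightarrow> real"
  assumes "finite C" "finite V"
  shows "(\<Sum>i\<in>Inl ` (Inl ` C \<union> Inr ` UNIV) \<union> Inr ` (C \<times> Pow V). g i)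
       = (\<Sum>c\<in>C. g (Inl (Inl c))) + g (Inl (Inr True)) + g (Inl (Inr False)) + (\<Sum>aw\<in>C \<times> Pow V. g (Inr aw))"
proof -
  have f1: "finite (Inl ` (Inl ` C \<union> Inr ` (UNIV::bool set)) :: (('c + bool) + ('c \<times> 'v set)) set)"
    using assms by simp
  have f2: "finite (Inr ` (C \<times> Pow V) :: (('c + bool) + ('c \<times> 'v set)) set)" using assms by simp
  have "(\<Sum>i\<in>Inl ` (Inl ` C \<union> Inr ` UNIV) \<union> Inr ` (C \<times> Pow V). g i)
      = (\<Sum>i\<in>Inl ` (Inl ` C \<union> Inr ` UNIV). g i) + (\<Sum>i\<in>Inr ` (C \<times> Pow V). g i)"
    by (rule sum.union_disjoint[OF f1 f2]) auto
  also have "(\<Sum>i\<in>Inr ` (C \<times> Pow V). g i) = (\<Sum>aw\<in>C \<times> Pow V. g (Inr aw))"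
    by (subst sum.reindex) (auto simp: inj_on_def)
  also have "(\<Sum>i\<in>Inl ` (Inl ` C \<union> Inr ` UNIV). g i) = (\<Sum>i\<in>Inl ` C \<union> Inr ` UNIV. g (Inl i))"
    by (subst sum.reindex) (auto simp: inj_on_def)
  also have "\<dots> = (\<Sum>i\<in>Inl ` C. g (Inl i)) + (\<Sum>i\<in>Inr ` UNIV. g (Inl i))"
    using assms by (intro sum.union_disjoint) auto
  also have "(\<Sum>i\<in>Inl ` C. g (Inl i)) = (\<Sum>c\<in>C. g (Inl (Inl c)))"
    by (subst sum.reindex) (auto simp: inj_on_def)
  also have "(\<Sum>i\<in>Inr ` UNIV. g (Inl i)) = g (Inl (Inr True)) + g (Inl (Inr False))"
    by (subst sum.reindex) (auto simp: inj_on_def UNIV_bool)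
  finally show ?thesis by simp
qed

lemma exists_p:
  fixes V :: "'v set" and C :: "'c set" and P and t :: real
  assumes fV: "finite V" and Vne: "V \<noteq> {}" and fC: "finite C" and Cne: "C \<noteq> {}"
    and ord: "\<forall>v\<in>V. slo C (P v)" and t0: "0 \<le> t" and t1: "t \<le> 1"
  shows "\<exists>p. (\<forall>c\<in>C. 0 \<le> p c) \<and> sum p C = 1 \<and>
     (\<forall>a\<in>C. \<forall>W\<subseteq>V. (\<Sum>v\<in>W. (\<Sum>c\<in>{c\<in>C. P v a c}. p c) - t) \<le> real (card V) * (1-t)^2/2)"
proof -
  define nB where "nB = real (card V) * (1-t)^2/2"
  define I :: "(('c + bool) + ('c \<times> 'v set)) set" where "I = Inl ` (Inl ` C \<union> Inr ` UNIV) \<union> Inr ` (C \<times> Pow V)"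
  define A :: "('c + bool) + ('c \<times> 'v set) \<Rightarrow> 'c \<Rightarrow> real" where
    "A i j = (case i of Inl (Inl c) \<Rightarrow> (if j = c then -1 else 0) | Inl (Inr bb) \<Rightarrow> (if bb then 1 else -1)
        | Inr (a, W) \<Rightarrow> (\<Sum>v\<in>W. if P v a j then 1 else 0))" for i j
  define b :: "('c + bool) + ('c \<times> 'v set) \<Rightarrow> real" where
    "b i = (case i of Inl (Inl c) \<Rightarrow> 0 | Inl (Inr bb) \<Rightarrow> (if bb then 1 else -1)
        | Inr (a, W) \<Rightarrow> nB + t * real (card W))" for i
  have fI: "finite I" using fC fV by (simp add: I_def)
  from farkas_indexed[OF fC fI, of A b] show ?thesis
  proof
    assume "\<exists>x. \<forall>i\<in>I. (\<Sum>j\<in>C. A i j * x j) \<le> b i"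
    then obtain x where x: "\<And>i. i \<in> I \<Longrightarrow> (\<Sum>j\<in>C. A i j * x j) \<le> b i" by blast
    have nn: "0 \<le> x c" if "c \<in> C" for c
    proof -
      have "Inl (Inl c) \<in> I" using that by (simp add: I_def)
      from x[OF this] have "(\<Sum>j\<in>C. (if j = c then -1 else 0) * x j) \<le> 0" by (simp add: A_def b_def)
      also have "(\<Sum>j\<in>C. (if j = c then -1 else 0) * x j) = (\<Sum>j\<in>C. if j = c then - x c else 0)"
        by (intro sum.cong refl) auto
      also have "\<dots> = - x c" using that fC by (simp add: sum.delta')
      finally show ?thesis by simp
    qed
    have "Inl (Inr True) \<in> I" "Inl (Inr False) \<in> I" by (auto simp: I_def)
    from x[OF this(1)] x[OF this(2)] have s1: "sum x C = 1" by (simp add: A_def b_def sum_negf)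
    have "\<forall>a\<in>C. \<forall>W\<subseteq>V. (\<Sum>v\<in>W. (\<Sum>c\<in>{c\<in>C. P v a c}. x c) - t) \<le> nB"
    proof (intro ballI allI impI)
      fix a W assume a: "a \<in> C" and W: "W \<subseteq> V"
      hence "Inr (a, W) \<in> I" by (simp add: I_def)
      from x[OF this] have "(\<Sum>j\<in>C. (\<Sum>v\<in>W. if P v a j then 1 else 0) * x j) \<le> nB + t * real (card W)"
        by (simp add: A_def b_def)
      hence "(\<Sum>v\<in>W. \<Sum>c\<in>{c\<in>C. P v a c}. x c) \<le> nB + t * real (card W)"
        unfolding sum_N[OF fC finite_subset[OF W fV]] .
      thus "(\<Sum>v\<in>W. (\<Sum>c\<in>{c\<in>C. P v a c}. x c) - t) \<le> nB"
        by (simp add: sum_subtractf algebra_simps)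
    qed
    thus ?thesis using nn s1 unfolding nB_def by blast
  next
    assume "\<exists>l. (\<forall>i\<in>I. 0 \<le> l i) \<and> (\<forall>j\<in>C. (\<Sum>i\<in>I. l i * A i j) = 0) \<and> (\<Sum>i\<in>I. l i * b i) < 0"
    then obtain l where lnn: "\<And>i. i \<in> I \<Longrightarrow> 0 \<le> l i"
      and lco: "\<And>j. j \<in> C \<Longrightarrow> (\<Sum>i\<in>I. l i * A i j) = 0" and lrhs: "(\<Sum>i\<in>I. l i * b i) < 0" by blast
    define mu where "mu c = l (Inl (Inl c))" for c
    define beta where "beta = l (Inl (Inr True)) - l (Inl (Inr False))"
    define ll :: "'c \<times> 'v set \<Rightarrow> real" where "ll aw = l (Inr aw)" for aw
    define N :: "'c \<times> 'v set \<Rightarrow> 'c \<Rightarrow> real" where "N aw j = (case aw of (a, W) \<Rightarrow> (\<Sum>v\<in>W. if P v a j then 1 else 0::real))" for aw j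
    define bb :: "'c \<times> 'v set \<Rightarrow> real" where "bb aw = (case aw of (a, W) \<Rightarrow> nB + t * real (card W))" for aw
    have munn: "0 \<le> mu c" if "c \<in> C" for c using lnn that by (simp add: mu_def I_def)
    have llnn: "0 \<le> ll aw" if "aw \<in> C \<times> Pow V" for aw using lnn that by (auto simp: ll_def I_def)
    have coef: "- mu j + beta + (\<Sum>aw\<in>C \<times> Pow V. ll aw * N aw j) = 0" if j: "j \<in> C" for j
    proof -
      have "(\<Sum>c\<in>C. l (Inl (Inl c)) * A (Inl (Inl c)) j) = (\<Sum>c\<in>C. if c = j then - mu c else 0)"
        by (intro sum.cong refl) (auto simp: A_def mu_def)
      also have "\<dots> = - mu j" using j fC by (simp add: sum.delta)
      finally have e1: "(\<Sum>c\<in>C. l (Inl (Inl c)) * A (Inl (Inl c)) j) = - mu j" .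
      have e2: "(\<Sum>aw\<in>C \<times> Pow V. l (Inr aw) * A (Inr aw) j) = (\<Sum>aw\<in>C \<times> Pow V. ll aw * N aw j)"
        by (intro sum.cong refl) (auto simp: A_def ll_def N_def)
      have "(\<Sum>i\<in>I. l i * A i j) = - mu j + beta + (\<Sum>aw\<in>C \<times> Pow V. ll aw * N aw j)"
        unfolding I_def sum_split4[OF fC fV] e1 e2 by (simp add: A_def beta_def)
      thus ?thesis using lco[OF j] by simp
    qed
    have rhs: "beta + (\<Sum>aw\<in>C \<times> Pow V. ll aw * bb aw) < 0"
    proof -
      have e2: "(\<Sum>aw\<in>C \<times> Pow V. l (Inr aw) * b (Inr aw)) = (\<Sum>aw\<in>C \<times> Pow V. ll aw * bb aw)"
        by (intro sum.cong refl) (auto simp: b_def ll_def bb_def)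
      have "(\<Sum>i\<in>I. l i * b i) = beta + (\<Sum>aw\<in>C \<times> Pow V. ll aw * bb aw)"
        unfolding I_def sum_split4[OF fC fV] e2 by (simp add: b_def beta_def)
      thus ?thesis using lrhs by simp
    qed
    define Lam where "Lam = (\<Sum>aw\<in>C \<times> Pow V. ll aw)"
    have fCV: "finite (C \<times> Pow V)" using fC fV by simp
    have Lam0: "0 \<le> Lam" unfolding Lam_def using llnn by (intro sum_nonneg) auto
    show ?thesis
    proof (cases "Lam = 0")
      case True
      hence z: "\<forall>aw\<in>C \<times> Pow V. ll aw = 0" using sum_nonneg_eq_0_iff[OF fCV] llnn unfolding Lam_def by blast
      obtain j where j: "j \<in> C" using Cne by blast
      from coef[OF j] z have "beta = mu j" by simp
      moreover from rhs z have "beta < 0" by simp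
      ultimately show ?thesis using munn[OF j] by simp
    next
      case False
      hence Lpos: "Lam > 0" using Lam0 by simp
      define q where "q a = (\<Sum>W\<in>Pow V. ll (a, W)) / Lam" for a
      have qnn: "0 \<le> q a" if "a \<in> C" for a
        unfolding q_def using llnn that Lpos by (intro divide_nonneg_pos sum_nonneg) auto
      have Lsplit: "(\<Sum>aw\<in>C \<times> Pow V. h aw) = (\<Sum>a\<in>C. \<Sum>W\<in>Pow V. h (a, W))" for h :: "_ \<Rightarrow> real"
        by (simp add: sum.cartesian_product)
      have qsum: "sum q C = 1"
      proof -
        have "sum q C = (\<Sum>a\<in>C. \<Sum>W\<in>Pow V. ll (a, W)) / Lam" unfolding q_def by (simp add: sum_divide_distrib)
        also have "\<dots> = 1" using Lpos unfolding Lam_def Lsplit by simp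
        finally show ?thesis .
      qed
      define Q where "Q v a = (\<Sum>c\<in>{c\<in>C. P v a c}. q c)" for v a
      define Phi where "Phi a = (\<Sum>v\<in>V. max 0 (Q v a - t))" for a
      have muq: "0 \<le> (\<Sum>j\<in>C. q j * mu j)" using qnn munn by (intro sum_nonneg) auto
      define X where "X j = (\<Sum>aw\<in>C \<times> Pow V. ll aw * N aw j)" for j
      have "(\<Sum>j\<in>C. q j * (- mu j + beta + X j)) = 0"
        using coef by (simp add: X_def)
      moreover have "(\<Sum>j\<in>C. q j * (- mu j + beta + X j)) = (\<Sum>j\<in>C. - (q j * mu j) + beta * q j + q j * X j)"
        by (intro sum.cong refl) (simp add: algebra_simps)
      moreover have "\<dots> = - (\<Sum>j\<in>C. q j * mu j) + beta * sum q C + (\<Sum>j\<in>C. q j * X j)"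
        by (simp add: sum.distrib sum_negf sum_distrib_left sum_subtractf)
      ultimately have e0: "(\<Sum>j\<in>C. q j * X j) = (\<Sum>j\<in>C. q j * mu j) - beta"
        using qsum by simp
      have "(\<Sum>j\<in>C. q j * X j) = (\<Sum>j\<in>C. \<Sum>aw\<in>C \<times> Pow V. ll aw * (N aw j * q j))"
        unfolding X_def sum_distrib_left by (intro sum.cong refl) (simp add: algebra_simps)
      also have "\<dots> = (\<Sum>aw\<in>C \<times> Pow V. \<Sum>j\<in>C. ll aw * (N aw j * q j))" by (rule sum.swap)
      also have "\<dots> = (\<Sum>aw\<in>C \<times> Pow V. ll aw * (\<Sum>j\<in>C. N aw j * q j))" by (simp add: sum_distrib_left)
      finally have e: "(\<Sum>aw\<in>C \<times> Pow V. ll aw * (\<Sum>j\<in>C. N aw j * q j)) = (\<Sum>j\<in>C. q j * mu j) - beta"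
        using e0 by simp
      have NQ: "(\<Sum>j\<in>C. N aw j * q j) = (\<Sum>v\<in>snd aw. Q v (fst aw))" if awin: "aw \<in> C \<times> Pow V" for aw
      proof -
        obtain a W where aW: "aw = (a, W)" "W \<subseteq> V" using awin by auto
        have fW: "finite W" using aW fV finite_subset by blast
        show ?thesis using sum_N[OF fC fW, of P a q] aW by (simp add: N_def Q_def)
      qed
      have bound: "(\<Sum>v\<in>snd aw. Q v (fst aw)) - bb aw \<le> Phi (fst aw) - nB" if aw: "aw \<in> C \<times> Pow V" for aw
      proof -
        obtain a W where aW: "aw = (a, W)" "W \<subseteq> V" using aw by auto
        have fW: "finite W" using aW fV finite_subset by blast
        have "(\<Sum>v\<in>W. Q v a) - t * real (card W) = (\<Sum>v\<in>W. Q v a - t)" by (simp add: sum_subtractf)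
        also have "\<dots> \<le> (\<Sum>v\<in>W. max 0 (Q v a - t))" by (intro sum_mono) auto
        also have "\<dots> \<le> Phi a" unfolding Phi_def using aW fV by (intro sum_mono2) auto
        finally show ?thesis using aW by (simp add: bb_def)
      qed
      have "(\<Sum>aw\<in>C \<times> Pow V. ll aw * ((\<Sum>v\<in>snd aw. Q v (fst aw)) - bb aw))
          \<le> (\<Sum>aw\<in>C \<times> Pow V. ll aw * (Phi (fst aw) - nB))"
        using bound llnn by (intro sum_mono mult_left_mono) auto
      also have "\<dots> = (\<Sum>a\<in>C. (\<Sum>W\<in>Pow V. ll (a, W)) * (Phi a - nB))"
        unfolding Lsplit by (simp add: sum_distrib_right)
      also have "\<dots> = Lam * (\<Sum>a\<in>C. q a * (Phi a - nB))"
        unfolding q_def using Lpos by (simp add: sum_distrib_left)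
      also have "(\<Sum>a\<in>C. q a * (Phi a - nB)) = (\<Sum>a\<in>C. q a * Phi a) - nB"
      proof -
        have "(\<Sum>a\<in>C. nB * q a) = nB" using qsum by (simp add: sum_distrib_left[symmetric])
        thus ?thesis by (simp add: algebra_simps sum_subtractf)
      qed
      also have "(\<Sum>a\<in>C. q a * Phi a) = (\<Sum>v\<in>V. \<Sum>a\<in>C. q a * max 0 (Q v a - t))"
        unfolding Phi_def by (simp add: sum_distrib_left sum.swap[of _ C])
      also have "\<dots> \<le> (\<Sum>v\<in>V. (max 0 (sum q C - t))^2 / 2)"
        unfolding Q_def using voter_bound[OF fC _ ] ord qnn by (intro sum_mono) auto
      also have "\<dots> = nB" using qsum t1 by (simp add: nB_def)
      finally have le0: "(\<Sum>aw\<in>C \<times> Pow V. ll aw * ((\<Sum>v\<in>snd aw. Q v (fst aw)) - bb aw)) \<le> 0"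
        using Lpos by (simp add: mult_le_0_iff)
      have "(\<Sum>aw\<in>C \<times> Pow V. ll aw * ((\<Sum>v\<in>snd aw. Q v (fst aw)) - bb aw))
          = (\<Sum>aw\<in>C \<times> Pow V. ll aw * (\<Sum>j\<in>C. N aw j * q j)) - (\<Sum>aw\<in>C \<times> Pow V. ll aw * bb aw)"
        using NQ by (simp add: algebra_simps sum_subtractf)
      also have "\<dots> = (\<Sum>j\<in>C. q j * mu j) - (beta + (\<Sum>aw\<in>C \<times> Pow V. ll aw * bb aw))" using e by simp
      finally have "0 < (\<Sum>aw\<in>C \<times> Pow V. ll aw * ((\<Sum>v\<in>snd aw. Q v (fst aw)) - bb aw))"
        using rhs muq by simp
      thus ?thesis using le0 by simp
    qed
  qed
qed


lemma pad_subset: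
  assumes "finite C" "T \<subseteq> C" "card T \<le> k" "k \<le> card C"
  shows "\<exists>S. T \<subseteq> S \<and> S \<subseteq> C \<and> card S = k"
proof -
  have fT: "finite T" using assms finite_subset by blast
  have "card (C - T) = card C - card T" using assms fT by (simp add: card_Diff_subset)
  hence "k - card T \<le> card (C - T)" using assms by simp
  then obtain U where U: "U \<subseteq> C - T" "card U = k - card T" "finite U" by (rule obtain_subset_with_card_n)
  have "card (T \<union> U) = card T + card U" using U fT by (intro card_Un_disjoint) auto
  hence "card (T \<union> U) = k" using U assms by simp
  thus ?thesis using U assms by (intro exI[of _ "T \<union> U"]) auto
qed

lemma slo_eq: "strict_linear_order_on C R = slo C R"
  by (simp add: strict_linear_order_on_def slo_def)

lemma trivial_case:
  fixes V :: "'v set" and C :: "'c set"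
  assumes fV: "finite V" and Vne: "V \<noteq> {}" and fC: "finite C" and Cne: "C \<noteq> {}"
    and ord: "\<forall>v\<in>V. slo C (P v)" and k1: "1 \<le> k" and kC: "k \<le> card C" and al: "1 \<le> al"
  shows "\<exists>S. S \<subseteq> C \<and> card S = k \<and> undominated V C P al S"
proof -
  obtain v0 where v0: "v0 \<in> V" using Vne by blast
  have so: "slo C (P v0)" using ord v0 by blast
  obtain x0 where x0: "x0 \<in> C" "\<forall>c\<in>C - {x0}. P v0 x0 c" using exists_top[OF fC Cne so] by blast
  obtain S where S: "{x0} \<subseteq> S" "S \<subseteq> C" "card S = k" using pad_subset[OF fC, of "{x0}" k] x0 k1 kC by auto
  have "dom_fraction V P a S < al" if a: "a \<in> C" for a
  proof -
    define D where "D = {v\<in>V. prefers_to_committee P v a S}"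
    have "v0 \<notin> D"
    proof
      assume "v0 \<in> D"
      hence "P v0 a x0" using S by (auto simp: D_def prefers_to_committee_def)
      moreover have "\<not> P v0 a x0"
      proof (cases "a = x0")
        case True thus ?thesis using so x0 unfolding slo_def by blast
      next
        case False thus ?thesis using so x0 a slo_asym[OF so] by blast
      qed
      ultimately show False by blast
    qed
    hence "D \<subseteq> V - {v0}" by (auto simp: D_def)
    hence "card D \<le> card (V - {v0})" using fV by (intro card_mono) auto
    also have "\<dots> < card V" by (rule card_Diff1_less[OF fV v0])
    finally have "real (card D) < real (card V)" by simp
    hence "real (card D) / real (card V) < 1" using Vne fV by simp
    thus ?thesis using al by (simp add: dom_fraction_def D_def)
  qed
  thus ?thesis using S unfolding undominated_def by blast
qed

lemma key_ineq:
  fixes t th al :: real and k :: nat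
  assumes k1: "1 \<le> k" and t0: "0 \<le> t" and tth: "t < th"
    and al: "al = t^k - t + 1" and thk: "th^k = al"
    and hyp: "real k / real (k + 1) * (th^(k+1) - t^(k+1)) \<ge> (1 - t^2) / 2"
  shows "al * (th - t) - Hf th t k th \<ge> (1 - t)^2/2"
proof -
  define r where "r = real k / real (k+1)"
  define X where "X = th^(k+1)"
  define Y where "Y = t^(k+1)"
  define tau where "tau = t^k"
  have H: "Hf th t k th = (th - t) * tau + (th * al - r * X) - (th * tau - r * Y)"
    using tth by (simp add: Hf_def Kf_def thk r_def X_def Y_def tau_def)
  have al2: "al = tau - t + 1" by (simp add: al tau_def)
  have "al * (th - t) - Hf th t k th = r * (X - Y) - t + t^2"
    unfolding H al2 by (simp add: algebra_simps power2_eq_square)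
  moreover have "r * (X - Y) \<ge> (1 - t^2)/2" using hyp by (simp add: r_def X_def Y_def)
  moreover have "(1 - t)^2/2 = (1 - t^2)/2 - t + t^2" by (simp add: power2_eq_square field_simps)
  ultimately show ?thesis by linarith
qed

theorem theorem5:
  fixes k :: nat and t :: real
    and V :: "'v set" and C :: "'c set" and P :: "'v \<Rightarrow> 'c \<Rightarrow> 'c \<Rightarrow> bool"
  assumes "k \<ge> 1"
    and "0 \<le> t" and "t \<le> 1"
    and "real k / real (k + 1) * ((t ^ k - t + 1) powr (real (k + 1) / real k) - t ^ (k + 1))
           \<ge> (1 - t ^ 2) / 2"
    and "election V C P"
    and "k \<le> card C"
  shows "\<exists>S. S \<subseteq> C \<and> card S = k \<and> undominated V C P (t ^ k - t + 1) S"
proof -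
  note k1 = assms(1) and t0 = assms(2) and t1 = assms(3) and hyp = assms(4) and kC = assms(6)
  have fV: "finite V" and Vne: "V \<noteq> {}" and fC: "finite C" and ord: "\<forall>v\<in>V. slo C (P v)"
    using assms(5) by (auto simp: election_def slo_eq)
  have Cne: "C \<noteq> {}" using k1 kC by auto
  define al where "al = t ^ k - t + 1"
  show ?thesis
  proof (cases "t = 1")
    case True
    hence "al = 1" by (simp add: al_def)
    thus ?thesis using trivial_case[OF fV Vne fC Cne ord k1 kC, of al] by (simp add: al_def)
  next
    case False
    hence tl1: "t < 1" using t1 by simp
    have tk: "t^k \<le> t" using t0 t1 k1 by (metis power_decreasing power_one_right)
    have "0 \<le> t^k" using t0 by simp
    hence alpos: "0 < al" using tl1 unfolding al_def by linarith
    have al1: "al \<le> 1" using tk by (simp add: al_def)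
    have tkal: "t^k < al" using tl1 by (simp add: al_def)
    define th where "th = root k al"
    have kpos: "0 < k" using k1 by simp
    have thk: "th^k = al" using alpos kpos by (simp add: th_def)
    have thpos: "0 < th" using alpos kpos by (simp add: th_def)
    have th1: "th \<le> 1" using al1 kpos by (simp add: th_def)
    have tth: "t < th" using tkal thk thpos by (intro power_less_imp_less_base[of t k th]) auto
    have pw: "al powr (real (k + 1) / real k) = th^(k+1)"
    proof -
      have "al powr (real (k + 1) / real k) = (th powr real k) powr (real (k + 1) / real k)"
        using thk thpos by (simp add: powr_realpow)
      also have "\<dots> = th powr (real (k+1))" using kpos by (simp add: powr_powr)
      also have "\<dots> = th^(k+1)" using thpos by (rule powr_realpow)
      finally show ?thesis .
    qed
    have key: "al * (th - t) - Hf th t k th \<ge> (1 - t)^2/2"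
      using key_ineq[OF k1 t0 tth al_def thk] hyp pw by (simp add: al_def)
    obtain p where p0: "\<forall>c\<in>C. 0 \<le> p c" and p1: "sum p C = 1"
      and pW: "\<forall>a\<in>C. \<forall>W\<subseteq>V. (\<Sum>v\<in>W. (\<Sum>c\<in>{c\<in>C. P v a c}. p c) - t) \<le> real (card V) * (1-t)^2/2"
      using exists_p[OF fV Vne fC Cne ord t0 t1] by blast
    define H1 where "H1 = Hf th t k th"
    have H1eq: "Hf th t k (sum p C) = H1"
    proof (cases "th = 1")
      case True thus ?thesis by (simp add: p1 H1_def)
    next
      case False thus ?thesis using th1 H_high[of th 1 t k] tth by (simp add: p1 H1_def)
    qed
    have m0: "(t + th)/2 \<le> sum p C" using tl1 th1 p1 by simp
    define w where "w v f = Max ((\<lambda>i. Fm C (P v) p (f i)) ` {..<k})" for v f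
    define A where "A = PiE {..<k} (\<lambda>_. C)"
    have Ev_lt: "Ev k th t C (P v) p < H1" if "v \<in> V" for v
      using sample_bound[OF fC _ p0 k1 t0 tth, of "P v"] ord that m0 H1eq by auto
    have fA: "finite A" unfolding A_def using fC by (intro finite_PiE) auto
    have wsum: "(\<Sum>f\<in>A. (\<Prod>i<k. p (f i))) = 1" using prod_PiE_pow[OF fC, where k=k and p=p] p1 by (simp add: A_def)
    have "(\<Sum>f\<in>A. (\<Prod>i<k. p (f i)) * (\<Sum>v\<in>V. psi th t (w v f))) = (\<Sum>v\<in>V. Ev k th t C (P v) p)"
      unfolding Ev_def A_def w_def sum_distrib_left by (rule sum.swap)
    also have "\<dots> < (\<Sum>v\<in>V. H1)" using Ev_lt fV Vne by (intro sum_strict_mono) auto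
    also have "\<dots> = real (card V) * H1" by simp
    finally have avg: "(\<Sum>f\<in>A. (\<Prod>i<k. p (f i)) * (\<Sum>v\<in>V. psi th t (w v f))) < real (card V) * H1" .
    have "\<exists>f\<in>A. (\<Sum>v\<in>V. psi th t (w v f)) < real (card V) * H1"
    proof (rule ccontr)
      assume "\<not> ?thesis"
      hence ge: "\<forall>f\<in>A. real (card V) * H1 \<le> (\<Sum>v\<in>V. psi th t (w v f))" by (auto simp: not_less)
      have "real (card V) * H1 = (\<Sum>f\<in>A. (\<Prod>i<k. p (f i)) * (real (card V) * H1))"
        using wsum by (simp add: sum_distrib_right[symmetric])
      also have "\<dots> \<le> (\<Sum>f\<in>A. (\<Prod>i<k. p (f i)) * (\<Sum>v\<in>V. psi th t (w v f)))"
      proof (intro sum_mono mult_left_mono)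
        fix f assume f: "f \<in> A"
        show "real (card V) * H1 \<le> (\<Sum>v\<in>V. psi th t (w v f))" using ge f by blast
        show "0 \<le> (\<Prod>i<k. p (f i))" using f p0 by (intro prod_nonneg) (auto simp: A_def)
      qed
      finally show False using avg by simp
    qed
    then obtain f where fA': "f \<in> A" and fbound: "(\<Sum>v\<in>V. psi th t (w v f)) < real (card V) * H1" by blast
    have fimg: "f ` {..<k} \<subseteq> C" using fA' by (auto simp: A_def)
    have "card (f ` {..<k}) \<le> k" using card_image_le[of "{..<k}" f] by simp
    then obtain S where S: "f ` {..<k} \<subseteq> S" "S \<subseteq> C" "card S = k"
      using pad_subset[OF fC fimg _ kC] by blast
    have "dom_fraction V P a S < al" if a: "a \<in> C" for a
    proof -
      define D where "D = {v\<in>V. prefers_to_committee P v a S}"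
      define y where "y v = (\<Sum>c\<in>{c\<in>C. P v a c}. p c)" for v
      have fD: "finite D" using fV by (simp add: D_def)
      have DV: "D \<subseteq> V" by (auto simp: D_def)
      have wy: "w v f \<le> y v" if vD: "v \<in> D" for v
      proof -
        have vV: "v \<in> V" using vD by (simp add: D_def)
        have so: "slo C (P v)" using ord vV by blast
        have pa: "\<forall>i<k. P v a (f i)" using vD S by (auto simp: D_def prefers_to_committee_def)
        have "Fm C (P v) p (f i) \<le> y v" if i: "i < k" for i
        proof -
          have fi: "f i \<in> C" using fimg i by auto
          have "{c'\<in>C. c' = f i \<or> P v (f i) c'} \<subseteq> {c\<in>C. P v a c}"
            using pa i so a fi unfolding slo_def by blast
          thus ?thesis unfolding Fm_def y_def using p0 fC by (intro sum_mono2) auto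
        qed
        moreover have "{..<k} \<noteq> {}" using k1 by (simp add: lessThan_empty_iff)
        ultimately show ?thesis unfolding w_def by (subst Max_le_iff) auto
      qed
      define W where "W = {v\<in>D. t \<le> y v}"
      have WV: "W \<subseteq> V" using DV by (auto simp: W_def)
      have "(\<Sum>v\<in>W. y v - t) \<le> real (card V) * (1-t)^2/2" using pW a WV by (simp add: y_def)
      moreover have "(\<Sum>v\<in>W. y v - t) = (\<Sum>v\<in>D. max 0 (y v - t))"
        unfolding W_def using fD by (simp add: sum.inter_filter max_def)
      moreover have "(\<Sum>v\<in>D. max 0 (y v - t)) \<ge> (\<Sum>v\<in>D. (th - t) - psi th t (w v f))"
      proof (intro sum_mono)
        fix v assume "v \<in> D"
        hence "w v f \<le> y v" using wy by blast
        hence "max 0 (w v f - t) \<le> max 0 (y v - t)" by (intro max.mono) auto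
        moreover have "(th - t) - psi th t (w v f) \<le> max 0 (w v f - t)" by (auto simp: psi_def max_def)
        ultimately show "(th - t) - psi th t (w v f) \<le> max 0 (y v - t)" by linarith
      qed
      moreover have "(\<Sum>v\<in>D. (th - t) - psi th t (w v f)) = real (card D) * (th - t) - (\<Sum>v\<in>D. psi th t (w v f))"
        by (simp add: sum_subtractf)
      moreover have "(\<Sum>v\<in>D. psi th t (w v f)) \<le> (\<Sum>v\<in>V. psi th t (w v f))"
        using fV DV by (intro sum_mono2) (auto simp: psi_nonneg)
      ultimately have c1: "real (card D) * (th - t) - real (card V) * H1 < real (card V) * (1-t)^2/2"
        using fbound by linarith
      have nV: "0 < real (card V)" using fV Vne by (simp add: card_gt_0_iff)
      have "real (card D) < al * real (card V)"
      proof (rule ccontr)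
        assume "\<not> ?thesis"
        hence "al * real (card V) * (th - t) \<le> real (card D) * (th - t)" using tth by (intro mult_right_mono) auto
        hence "real (card V) * (al * (th - t) - H1) < real (card V) * ((1-t)^2/2)"
          using c1 by (simp add: algebra_simps)
        hence "al * (th - t) - H1 < (1-t)^2/2" using nV by simp
        thus False using key by (simp add: H1_def)
      qed
      thus ?thesis using nV by (simp add: dom_fraction_def D_def divide_less_eq)
    qed
    thus ?thesis using S unfolding undominated_def al_def by blast
  qed
qed


end
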